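(* Let $S_0,S_1\in\mathbb{R}$ and let $\pi_0,\pi_1>0$ with $\pi_0+\pi_1=1$ and $\pi_0\neq\pi_1$. For a real control signal $l$ and $\Delta>0$, consider the binary-input binary-output channel from $H\in\{0,1\}$ (with $\Pr(H=i)=\pi_i$) to $Y\in\{0,1\}$ given by $P_{Y|H}(0\mid i)=e^{-\lambda_i\Delta}$, $P_{Y|H}(1\mid i)=1-e^{-\lambda_i\Delta}$, where $\lambda_i=(S_i+l)^2$, and let $I_l(\Delta)=I(H;Y)$ be its mutual information. Then, in the limit of infinitesimal interval $\Delta\to 0$, the choice of $l$ maximizing the mutual information $I(H;Y)$ is $$l^*=\frac{S_0\pi_0-S_1\pi_1}{\pi_1-\pi_0},$$ in the sense that $\lim_{\Delta\to 0}I_{l^*}(\Delta)/\Delta\ \ge\ \lim_{\Delta\to0} I_l(\Delta)/\Delta$ for every real $l$; and with this choice, $\pi_0\sqrt{\lambda_0}=\pi_1\sqrt{\lambda_1}$.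
   Context: $\lambda_i$ is the rate of the Poisson photon-arrival process at the detector under hypothesis $H=i$ when the received coherent-state amplitude $S_i$ is displaced by the local control amplitude $l$; $Y$ indicates zero or one photon arrival in an interval of length $\Delta$. Mutual information is in nats. *)

theory Defs
  imports "HOL-Analysis.Analysis"
begin

definition rate :: "real \<Rightarrow> real \<Rightarrow> real" where
  "rate S l = (S + l)^2"

definition chan :: "real \<Rightarrow> real \<Rightarrow> nat \<Rightarrow> real" where
  "chan lam d y = (if y = 0 then exp (- lam * d) else 1 - exp (- lam * d))"

definition mutual_info_bin :: "(nat \<Rightarrow> real) \<Rightarrow> (nat \<Rightarrow> nat \<Rightarrow> real) \<Rightarrow> real" where
  "mutual_info_bin pr W =
     (\<Sum>i\<in>{0,1::nat}. \<Sum>y\<in>{0,1::nat}.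
        let p = pr i * W i y; q = (\<Sum>j\<in>{0,1::nat}. pr j * W j y)
        in if p = 0 then 0 else p * ln (W i y / q))"

definition I_l :: "(nat \<Rightarrow> real) \<Rightarrow> (nat \<Rightarrow> real) \<Rightarrow> real \<Rightarrow> real \<Rightarrow> real" where
  "I_l S pr l d = mutual_info_bin pr (\<lambda>i y. chan (rate (S i) l) d y)"

end

theory Submission
  imports Defs
begin


lemma exp_int01:
  fixes k :: real assumes "k \<noteq> 0"
  shows "((\<lambda>t. exp (k*t)) has_integral (exp k - 1)/k) {0..1}"
proof -
  have "((\<lambda>t. exp (k*t)) has_integral (exp (k*1)/k - exp (k*0)/k)) {0..1}"
    apply (rule fundamental_theorem_of_calculus)
     apply simp
    using assms
    apply (auto intro!: derivative_eq_intros simp: has_real_derivative_iff_has_vector_derivative[symmetric])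
    done
  then show ?thesis by (simp add: diff_divide_distrib)
qed

lemma holder2:
  fixes a b c e t :: real
  assumes "a>0" "b>0" "c>0" "e>0" "0\<le>t" "t\<le>1"
  shows "exp ((1-t)*ln a + t*ln b) + exp ((1-t)*ln c + t*ln e) \<le> exp ((1-t)*ln (a+c) + t*ln (b+e))"
proof -
  have y1: "(a/(a+c)) powr (1-t) * (b/(b+e)) powr t \<le> (1-t)*(a/(a+c)) + t*(b/(b+e))"
    by (rule Youngs_inequality_0) (use assms in auto)
  have y2: "(c/(a+c)) powr (1-t) * (e/(b+e)) powr t \<le> (1-t)*(c/(a+c)) + t*(e/(b+e))"
    by (rule Youngs_inequality_0) (use assms in auto)
  have s: "(1-t)*(a/(a+c)) + t*(b/(b+e)) + ((1-t)*(c/(a+c)) + t*(e/(b+e))) = 1"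
  proof -
    have "a/(a+c) + c/(a+c) = 1" "b/(b+e) + e/(b+e) = 1" using assms by (simp_all add: add_divide_distrib[symmetric])
    moreover have "(1-t)*(a/(a+c)) + t*(b/(b+e)) + ((1-t)*(c/(a+c)) + t*(e/(b+e)))
       = (1-t)*(a/(a+c) + c/(a+c)) + t*(b/(b+e) + e/(b+e))" by (simp add: algebra_simps)
    ultimately show ?thesis by simp
  qed
  define M where "M = (a+c) powr (1-t) * (b+e) powr t"
  have M: "M > 0" using assms by (simp add: M_def)
  have "a powr (1-t) * b powr t + c powr (1-t) * e powr t \<le> M"
  proof -
    have "(a powr (1-t) * b powr t + c powr (1-t) * e powr t) / M
       = (a/(a+c)) powr (1-t) * (b/(b+e)) powr t + (c/(a+c)) powr (1-t) * (e/(b+e)) powr t"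
      using assms by (simp add: M_def powr_divide add_divide_distrib)
    also have "\<dots> \<le> 1" using y1 y2 s by linarith
    finally show ?thesis using M by (simp add: divide_le_eq)
  qed
  then show ?thesis using assms
    by (simp add: M_def powr_def exp_add[symmetric] algebra_simps)
qed

lemma core:
  fixes p q X :: real
  assumes p: "p>0" and q: "q>0" and pq: "p+q=1" and pnq: "p\<noteq>q" and X1: "p<X" and X2: "X<1"
  shows "(p-q)/ln(p/q) \<le> q/ln(X/p) + p/ln((1-X)/q)"
proof -
  define Y where "Y = 1 - X"
  define d where "d = X - p"
  define u where "u = ln(X/p)"
  define vv where "vv = ln(Y/q)"
  define c where "c = ln(p/q)"
  have Y: "Y>0" "Y<q" using X1 X2 pq by (auto simp: Y_def)
  have d: "d>0" "p+d = X" "Y+d = q" using X1 pq by (auto simp: d_def Y_def)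
  have Xp: "X > 0" using X1 p by linarith
  have u: "u>0" using X1 p by (simp add: u_def)
  have vv: "vv<0" using Y q by (simp add: vv_def)
  have c: "c\<noteq>0" using p q pnq by (simp add: c_def)
  have eu: "exp (-u) = p/X" using p Xp by (simp add: u_def exp_minus exp_ln)
  have ev: "exp vv = Y/q" using Y q by (simp add: vv_def)
  have ec: "exp c = p/q" using p q by (simp add: c_def)
  have pw: "p*exp (vv * t) + d*exp (c * t) \<le> X*exp ((-u) * t)" if t: "0\<le>t" "t\<le>1" for t
  proof -
    have h: "exp ((1-t)*ln p + t*ln Y) + exp ((1-t)*ln d + t*ln d) \<le> exp ((1-t)*ln (p+d) + t*ln (Y+d))"
      by (rule holder2) (use p Y d t in auto)
    have h2: "exp ((1-t)*ln p + t*ln Y + t*(ln p - ln q)) + exp ((1-t)*ln d + t*ln d + t*(ln p - ln q))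
       \<le> exp ((1-t)*ln X + t*ln q + t*(ln p - ln q))"
      using mult_right_mono[OF h, of "exp (t*(ln p - ln q))"] d by (simp add: exp_add distrib_right)
    have e1: "p*exp (vv * t) = exp ((1-t)*ln p + t*ln Y + t*(ln p - ln q))"
    proof -
      have "p*exp (vv * t) = exp(ln p + vv * t)" using p by (simp add: exp_add)
      also have "ln p + vv * t = (1-t)*ln p + t*ln Y + t*(ln p - ln q)"
        using Y q by (simp add: vv_def ln_div algebra_simps)
      finally show ?thesis .
    qed
    have e2: "d*exp (c * t) = exp ((1-t)*ln d + t*ln d + t*(ln p - ln q))"
    proof -
      have "d*exp (c * t) = exp(ln d + c * t)" using d by (simp add: exp_add)
      also have "ln d + c * t = (1-t)*ln d + t*ln d + t*(ln p - ln q)"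
        using p q by (simp add: c_def ln_div algebra_simps)
      finally show ?thesis .
    qed
    have e3: "X*exp ((-u) * t) = exp ((1-t)*ln X + t*ln q + t*(ln p - ln q))"
    proof -
      have "X*exp ((-u) * t) = exp(ln X + (-u) * t)" using Xp by (simp add: exp_diff exp_minus field_simps)
      also have "ln X + (-u) * t = (1-t)*ln X + t*ln q + t*(ln p - ln q)"
        using p Xp by (simp add: u_def ln_div algebra_simps)
      finally show ?thesis .
    qed
    show ?thesis using h2 e1 e2 e3 by simp
  qed
  have i1: "((\<lambda>t. p*exp (vv * t) + d*exp (c * t)) has_integral (p*((exp vv - 1)/vv) + d*((exp c - 1)/c))) {0..1}"
    by (intro has_integral_add has_integral_mult_right exp_int01) (use vv c in auto)
  have i2: "((\<lambda>t. X*exp ((-u) * t)) has_integral (X*((exp (-u) - 1)/(-u)))) {0..1}"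
    by (intro has_integral_mult_right exp_int01) (use u in auto)
  have le: "p*((exp vv - 1)/vv) + d*((exp c - 1)/c) \<le> X*((exp (-u) - 1)/(-u))"
    by (rule has_integral_le[OF i1 i2]) (use pw in auto)
  have a1: "X*((exp (-u) - 1)/(-u)) = d/u" using Xp u by (simp add: eu d_def field_simps)
  have Yq: "Y/q - 1 = -d/q" proof - have "Y = q - d" using d(3) by simp thus ?thesis using q by (simp add: diff_divide_distrib) qed
  have a2: "p*((exp vv - 1)/vv) = -(p*d)/(q * vv)" using q vv by (simp add: ev Yq)
  have a3: "d*((exp c - 1)/c) = d*(p-q)/(q*c)" using q c by (simp add: ec field_simps)
  have "-(p*d)/(q* vv) + d*(p-q)/(q*c) \<le> d/u" using le a1 a2 a3 by simp
  moreover have "-(p*d)/(q * vv) + d*(p-q)/(q*c) = (d/q)*(-p/vv + (p-q)/c)" using q vv c by (simp add: field_simps)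
  moreover have "d/u = (d/q)*(q/u)" using q by simp
  ultimately have hh: "(d/q)*(-p/vv + (p-q)/c) \<le> (d/q)*(q/u)" by simp
  have "-p/vv + (p-q)/c \<le> q/u" by (rule mult_left_le_imp_le[OF hh]) (use d q in auto)
  hence "(p-q)/c \<le> q/u + p/vv" by (simp add: field_simps)
  then show ?thesis by (simp add: c_def u_def vv_def Y_def)
qed


lemma boundary:
  fixes p q :: real
  assumes p: "p>0" and q: "q>0" and pq: "p+q=1" and pnq: "p\<noteq>q"
  shows "(p-q)/ln(p/q) \<le> q/ln(1/p)"
proof -
  define u where "u = ln(1/p)"
  define c where "c = ln(p/q)"
  have p1: "p<1" using pq q by linarith
  have u: "u>0" using p p1 by (simp add: u_def)
  have c: "c\<noteq>0" using p q pnq by (simp add: c_def)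
  have pw: "q*exp (c * t) \<le> exp ((-u) * t)" if t: "0\<le>t" "t\<le>1" for t
  proof -
    have "q*exp (c * t) = exp (ln q + c * t)" using q by (simp add: exp_add)
    also have "\<dots> \<le> exp ((-u) * t)"
    proof -
      have "ln q \<le> 0" using q pq p by simp
      hence "(1-t) * ln q \<le> 0" using t by (simp add: mult_nonneg_nonpos)
      hence "ln q + c * t \<le> (-u) * t" using p q by (simp add: c_def u_def ln_div algebra_simps)
      thus ?thesis by simp
    qed
    finally show ?thesis .
  qed
  have i1: "((\<lambda>t. q*exp (c * t)) has_integral (q*((exp c - 1)/c))) {0..1}"
    by (intro has_integral_mult_right exp_int01) (use c in auto)
  have i2: "((\<lambda>t. exp ((-u) * t)) has_integral ((exp (-u) - 1)/(-u))) {0..1}"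
    by (intro exp_int01) (use u in auto)
  have le: "q*((exp c - 1)/c) \<le> (exp (-u) - 1)/(-u)"
    by (rule has_integral_le[OF i1 i2]) (use pw in auto)
  have ec: "exp c = p/q" using p q by (simp add: c_def)
  have eu: "exp (-u) = p" using p by (simp add: u_def ln_div exp_minus)
  have g1: "q*((exp c - 1)/c) = (p-q)/c" using q c by (simp add: ec field_simps)
  have g2: "(exp (-u) - 1)/(-u) = q/u"
  proof -
    have "(exp (-u) - 1)/(-u) = (1-p)/u" using u by (simp add: eu field_simps)
    thus ?thesis using pq by (simp add: algebra_simps)
  qed
  have "(p-q)/c \<le> q/u" using le g1 g2 by linarith
  thus ?thesis by (simp only: c_def u_def)
qed

definition Kc :: "real \<Rightarrow> real \<Rightarrow> real" where
  "Kc p q = p*q*ln(q/p)/(q-p)"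

lemma Kc_sym: "Kc p q = Kc q p"
proof (cases "p = q")
  case False
  show ?thesis
  proof (cases "p > 0 \<and> q > 0")
    case True
    then show ?thesis unfolding Kc_def using False
      by (simp add: ln_div field_simps)
  next
    case F: False
    have "ln(q/p) = - ln(p/q)" by (metis ln_inverse inverse_divide)
    thus ?thesis unfolding Kc_def by (simp add: field_simps) (simp add: minus_divide_right algebra_simps)
  qed
qed simp

lemma Kc_pos:
  assumes p: "p>0" and q: "q>0" and pnq: "p\<noteq>q"
  shows "Kc p q > 0"
proof (cases "p < q")
  case True
  hence "ln(q/p) > 0" using p by simp
  thus ?thesis using True p q by (simp add: Kc_def)
next
  case False
  hence "p > q" using pnq by simp
  hence "ln(q/p) < 0" using q p by (simp add: divide_less_eq)
  thus ?thesis using \<open>p>q\<close> p q by (simp add: Kc_def divide_neg_neg mult_pos_neg)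
qed

lemma Kc_ratio:
  assumes p: "p>0" and q: "q>0" and pnq: "p\<noteq>q"
  shows "p*q/Kc p q = (p-q)/ln(p/q)"
proof -
  have l: "ln(q/p) = - ln(p/q)" using p q by (simp add: ln_div)
  have "ln(p/q) \<noteq> 0" using p q pnq by simp
  thus ?thesis using p q pnq unfolding Kc_def l by (simp add: field_simps)
qed

lemma psd:
  fixes K A B x y :: real
  assumes K: "K>0" and A: "A>0" and B: "B<0" and AB: "A*B \<ge> K*(A+B)"
  shows "A*x^2 + B*y^2 \<le> K*(x-y)^2"
proof -
  have KB: "K - B > 0" using K B by simp
  have id: "(K-B)*(K*(x-y)^2 - A*x^2 - B*y^2) = ((K-B)*y - K*x)^2 + (A*B - K*(A+B))*x^2"
    by (simp add: power2_eq_square algebra_simps)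
  have "0 \<le> ((K-B)*y - K*x)^2 + (A*B - K*(A+B))*x^2" using AB by simp
  hence "0 \<le> (K-B)*(K*(x-y)^2 - A*x^2 - B*y^2)" using id by simp
  hence "0 \<le> K*(x-y)^2 - A*x^2 - B*y^2" using KB by (simp add: zero_le_mult_iff)
  thus ?thesis by simp
qed

lemma core2:
  fixes p q X :: real
  assumes p: "p>0" and q: "q>0" and pq: "p+q=1" and pnq: "p\<noteq>q" and X1: "p<X" and X2: "X<1"
  shows "p*q*(ln(X/p))*(ln((1-X)/q)) \<ge> Kc p q * (p*ln(X/p) + q*ln((1-X)/q))"
proof -
  define u where "u = ln(X/p)"
  define w where "w = ln((1-X)/q)"
  define K where "K = Kc p q"
  have u: "u>0" using X1 p by (simp add: u_def)
  have w: "w<0" using X1 X2 pq q p by (simp add: w_def divide_less_eq)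
  have K: "K>0" using Kc_pos p q pnq by (simp add: K_def)
  have h: "p*q/K \<le> q/u + p/w" using core[OF assms] Kc_ratio[OF p q pnq] by (simp add: K_def u_def w_def)
  have uw: "K*u*w < 0" using K u w by (simp add: mult_pos_neg)
  have f1: "(K*u*w)*(q/u + p/w) \<le> (K*u*w)*(p*q/K)" using mult_left_mono_neg[OF h, of "K*u*w"] uw by simp
  have f2: "(K*u*w)*(q/u + p/w) = K*(p*u + q*w)" using u w by (simp add: field_simps)
  have f3: "(K*u*w)*(p*q/K) = p*q*u*w" using K by (simp add: field_simps)
  have "K*(p*u + q*w) \<le> p*q*u*w" using f1 f2 f3 by linarith
  thus ?thesis by (simp only: K_def u_def w_def)
qed


lemma bound_pos:
  fixes p q x y :: real
  assumes p: "p>0" and q: "q>0" and pq: "p+q=1" and pnq: "p\<noteq>q" and y: "y\<noteq>0"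
    and big: "x^2 > p*x^2 + q*y^2"
  shows "p*x^2*ln(x^2/(p*x^2 + q*y^2)) + q*y^2*ln(y^2/(p*x^2 + q*y^2)) \<le> Kc p q * (x-y)^2"
proof -
  define m where "m = p*x^2 + q*y^2"
  have y2: "y^2 > 0" using y by simp
  have m: "m > 0" using p q y2 by (simp add: m_def add_nonneg_pos)
  define X where "X = p*x^2/m"
  have "p*m < p*x^2" using big p by (simp add: m_def)
  hence X1: "p < X" using m by (simp add: X_def less_divide_eq mult.commute)
  have oneX: "1 - X = q*y^2/m" using m pq by (simp add: X_def m_def field_simps)
  have "q*y^2/m > 0" using q y2 m by simp
  hence X2: "X < 1" using oneX by linarith
  have e1: "X/p = x^2/m" using p by (simp add: X_def)
  have e2: "(1-X)/q = y^2/m" using q by (simp add: oneX)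
  define u where "u = ln(x^2/m)"
  define w where "w = ln(y^2/m)"
  have c2: "p*q*u*w \<ge> Kc p q * (p*u + q*w)"
    using core2[OF p q pq pnq X1 X2] by (simp add: e1 e2 u_def w_def)
  have "1 < x^2/m" using big m by (simp add: m_def less_divide_eq_1_pos)
  hence u: "u > 0" by (simp add: u_def)
  have w: "w < 0"
  proof -
    have "1 - X < q" using X1 pq by linarith
    hence "(1-X)/q < 1" using q by simp
    hence "y^2/m < 1" using e2 by simp
    thus ?thesis using y2 m by (simp add: w_def)
  qed
  have "(p*u)*x^2 + (q*w)*y^2 \<le> Kc p q * (x-y)^2"
    by (rule psd) (use Kc_pos[OF p q pnq] u w p q c2 in \<open>auto simp: algebra_simps mult_pos_neg\<close>)
  thus ?thesis by (simp add: m_def u_def w_def algebra_simps)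
qed

definition Lf :: "real \<Rightarrow> real \<Rightarrow> real \<Rightarrow> real \<Rightarrow> real" where
  "Lf p0 p1 a0 a1 = (if a0 = 0 then 0 else p0*a0*ln(a0/(p0*a0+p1*a1)))
                  + (if a1 = 0 then 0 else p1*a1*ln(a1/(p0*a0+p1*a1)))"

lemma Lbound:
  fixes p0 p1 x0 x1 :: real
  assumes p0: "p0>0" and p1: "p1>0" and pq: "p0+p1=1" and pnq: "p0\<noteq>p1"
  shows "Lf p0 p1 (x0^2) (x1^2) \<le> Kc p0 p1 * (x0-x1)^2"
proof -
  have K: "Kc p0 p1 > 0" using Kc_pos[OF p0 p1 pnq] .
  consider "x0 = 0 \<and> x1 = 0" | "x0 = 0 \<and> x1 \<noteq> 0" | "x0 \<noteq> 0 \<and> x1 = 0" | "x0 \<noteq> 0 \<and> x1 \<noteq> 0" by blast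
  then show ?thesis
  proof cases
    case 1 then show ?thesis by (simp add: Lf_def)
  next
    case 2
    hence x1: "x1^2 > 0" by simp
    have b: "(p1-p0)/ln(p1/p0) \<le> p0/ln(1/p1)" using boundary[OF p1 p0] pq pnq by (simp add: add.commute)
    have u: "ln(1/p1) > 0" using p1 pq p0 by simp
    have r: "p1*p0/Kc p1 p0 = (p1-p0)/ln(p1/p0)" using Kc_ratio[OF p1 p0] pnq by simp
    have K': "Kc p1 p0 > 0" using K Kc_sym by metis
    have "p1*p0/Kc p1 p0 \<le> p0/ln(1/p1)" using b r by simp
    hence "p1*ln(1/p1) \<le> Kc p1 p0" using K' u p0 p1 by (simp add: field_simps)
    hence k: "p1*ln(1/p1) \<le> Kc p0 p1" using Kc_sym by metis
    have "Lf p0 p1 (x0^2) (x1^2) = p1*x1^2*ln(1/p1)" using 2 x1 p1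
      by (simp add: Lf_def)
    also have "\<dots> \<le> Kc p0 p1 * x1^2" using mult_right_mono[OF k, of "x1^2"] by (simp add: algebra_simps)
    finally show ?thesis using 2 by simp
  next
    case 3
    hence x0: "x0^2 > 0" by simp
    have b: "(p0-p1)/ln(p0/p1) \<le> p1/ln(1/p0)" using boundary[OF p0 p1 pq pnq] .
    have u: "ln(1/p0) > 0" using p1 pq p0 by simp
    have r: "p0*p1/Kc p0 p1 = (p0-p1)/ln(p0/p1)" using Kc_ratio[OF p0 p1 pnq] by simp
    have "p0*p1/Kc p0 p1 \<le> p1/ln(1/p0)" using b r by simp
    hence k: "p0*ln(1/p0) \<le> Kc p0 p1" using K u p0 p1 by (simp add: field_simps)
    have "Lf p0 p1 (x0^2) (x1^2) = p0*x0^2*ln(1/p0)" using 3 x0 p0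
      by (simp add: Lf_def)
    also have "\<dots> \<le> Kc p0 p1 * x0^2" using mult_right_mono[OF k, of "x0^2"] by (simp add: algebra_simps)
    finally show ?thesis using 3 by simp
  next
    case 4
    define m where "m = p0*x0^2 + p1*x1^2"
    have LL: "Lf p0 p1 (x0^2) (x1^2) = p0*x0^2*ln(x0^2/m) + p1*x1^2*ln(x1^2/m)"
      using 4 by (simp add: Lf_def m_def)
    consider "x0^2 > m" | "x0^2 = m" | "x0^2 < m" by linarith
    then show ?thesis
    proof cases
      case 1
      show ?thesis using bound_pos[OF p0 p1 pq pnq _ 1[unfolded m_def]] 4 LL by (simp add: m_def)
    next
      case 2
      have p0e: "p0 = 1 - p1" using pq by simp
      have "p1*x0^2 = p1*x1^2" using 2 unfolding m_def p0e by (simp add: algebra_simps)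
      hence "x0^2 = x1^2" using p1 by simp
      hence "x1^2 = m" using 2 by simp
      hence "Lf p0 p1 (x0^2) (x1^2) = 0" using LL 2 4 by simp
      thus ?thesis using K by simp
    next
      case 3
      have p0e: "p0 = 1 - p1" using pq by simp
      have "p1*x0^2 < p1*x1^2" using 3 unfolding m_def p0e by (simp add: algebra_simps)
      hence lt: "x0^2 < x1^2" using p1 by simp
      have "p0*x0^2 < p0*x1^2" using lt p0 by simp
      hence "x1^2 > p1*x1^2 + p0*x0^2" using pq by (simp add: p0e algebra_simps)
      from bound_pos[OF p1 p0 _ _ _ this] pq pnq 4
      have "p1*x1^2*ln(x1^2/(p1*x1^2 + p0*x0^2)) + p0*x0^2*ln(x0^2/(p1*x1^2 + p0*x0^2)) \<le> Kc p1 p0 * (x1-x0)^2"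
        by (simp add: add.commute)
      moreover have "(x1-x0)^2 = (x0-x1)^2" by (simp add: power2_commute)
      ultimately show ?thesis using LL Kc_sym[of p1 p0] by (simp add: m_def add.commute)
    qed
  qed
qed


lemma Lstar:
  fixes p0 p1 t :: real
  assumes p0: "p0>0" and p1: "p1>0" and pq: "p0+p1=1" and pnq: "p0\<noteq>p1"
  shows "Lf p0 p1 ((p1*t)^2) ((p0*t)^2) = Kc p0 p1 * (p1*t - p0*t)^2"
proof (cases "t = 0")
  case True then show ?thesis by (simp add: Lf_def)
next
  case False
  have t2: "t^2 > 0" using False by simp
  have m: "p0*(p1*t)^2 + p1*(p0*t)^2 = p0*p1*t^2" using pq
    by (simp add: power2_eq_square algebra_simps) (metis distrib_left mult.commute mult.left_commute mult_1)
  have r0: "(p1*t)^2/(p0*p1*t^2) = p1/p0" using p0 p1 t2 False by (simp add: power2_eq_square field_simps)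
  have r1: "(p0*t)^2/(p0*p1*t^2) = p0/p1" using p0 p1 t2 False by (simp add: power2_eq_square field_simps)
  have l: "ln(p0/p1) = - ln(p1/p0)" using p0 p1 by (simp add: ln_div)
  have "Lf p0 p1 ((p1*t)^2) ((p0*t)^2) = p0*(p1*t)^2*ln(p1/p0) + p1*(p0*t)^2*ln(p0/p1)"
    using False p0 p1 by (simp add: Lf_def m r0 r1)
  also have "\<dots> = p0*p1*t^2*(p1-p0)*ln(p1/p0)" unfolding l by (simp add: power2_eq_square algebra_simps)
  also have "\<dots> = Kc p0 p1 * (p1*t - p0*t)^2" using pnq
    by (simp add: Kc_def power2_eq_square field_simps)
  finally show ?thesis .
qed


definition Fx :: "real \<Rightarrow> real \<Rightarrow> real \<Rightarrow> real \<Rightarrow> real \<Rightarrow> real" where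
  "Fx p0 p1 a0 a1 d =
     p0*exp(-a0*d)*ln(exp(-a0*d)/(p0*exp(-a0*d)+p1*exp(-a1*d)))
   + p1*exp(-a1*d)*ln(exp(-a1*d)/(p0*exp(-a0*d)+p1*exp(-a1*d)))
   + ((if a0 = 0 then 0 else p0*(1-exp(-a0*d))*ln((1-exp(-a0*d))/(p0*(1-exp(-a0*d))+p1*(1-exp(-a1*d)))))
   + (if a1 = 0 then 0 else p1*(1-exp(-a1*d))*ln((1-exp(-a1*d))/(p0*(1-exp(-a0*d))+p1*(1-exp(-a1*d))))))"

lemma Ieq:
  fixes S pr :: "nat \<Rightarrow> real"
  assumes "pr 0 > 0" "pr 1 > 0" "d > 0"
  shows "I_l S pr l d = Fx (pr 0) (pr 1) (rate (S 0) l) (rate (S 1) l) d"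
proof -
  have nz: "(1 - exp (- a * d) = 0) \<longleftrightarrow> a = 0" for a :: real
    using assms(3) by auto
  show ?thesis
    using assms unfolding I_l_def mutual_info_bin_def chan_def Fx_def
    by (simp add: Let_def nz)
qed


lemma quot_lim:
  fixes f :: "real \<Rightarrow> real"
  assumes "f 0 = 0" "(f has_real_derivative D) (at 0)"
  shows "((\<lambda>d. f d / d) \<longlongrightarrow> D) (at_right 0)"
proof -
  have "(f has_real_derivative D) (at 0 within {0<..})"
    using assms(2) by (rule has_field_derivative_at_within)
  hence "((\<lambda>y. (f y - f 0) / (y - 0)) \<longlongrightarrow> D) (at 0 within {0<..})"
    by (simp add: has_field_derivative_iff)
  thus ?thesis using assms(1) by simp
qed

lemma lim_T0:
  fixes p0 p1 a0 a1 :: real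
  assumes p0: "p0>0" and p1: "p1>0" and pq: "p0+p1=1"
  shows "((\<lambda>d. (p0*exp(-a0*d)*ln(exp(-a0*d)/(p0*exp(-a0*d)+p1*exp(-a1*d)))
   + p1*exp(-a1*d)*ln(exp(-a1*d)/(p0*exp(-a0*d)+p1*exp(-a1*d)))) / d) \<longlongrightarrow> 0) (at_right 0)"
proof (rule quot_lim)
  show "p0*exp(-a0*0)*ln(exp(-a0*0)/(p0*exp(-a0*0)+p1*exp(-a1*0)))
   + p1*exp(-a1*0)*ln(exp(-a1*0)/(p0*exp(-a0*0)+p1*exp(-a1*0))) = 0" using pq by simp
  have fa: "a0*(p0*p0) + (a0*(p0*p1) + (a1*(p0*p1) + a1*(p1*p1))) = (a0*p0 + a1*p1)*(p0+p1)" by (simp add: algebra_simps)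
  have Q: "p0*exp(-a0*d)+p1*exp(-a1*d) > 0" for d using p0 p1 by (intro add_pos_pos) auto
  show "((\<lambda>d. p0*exp(-a0*d)*ln(exp(-a0*d)/(p0*exp(-a0*d)+p1*exp(-a1*d)))
   + p1*exp(-a1*d)*ln(exp(-a1*d)/(p0*exp(-a0*d)+p1*exp(-a1*d)))) has_real_derivative 0) (at 0)"
    using Q[of 0] pq
    apply (auto intro!: derivative_eq_intros simp: Q)
    apply (simp add: field_simps)
    apply (simp only: fa pq)
    apply simp
    done
qed


lemma lim_E:
  fixes a :: real
  shows "((\<lambda>d. (1 - exp(-a*d)) / d) \<longlongrightarrow> a) (at_right 0)"
  by (rule quot_lim) (auto intro!: derivative_eq_intros)

lemma lim_T1:
  fixes p0 p1 a0 a1 b a :: real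
  assumes M: "p0*a0 + p1*a1 > 0" and a: "a > 0"
  shows "((\<lambda>d. b*(1-exp(-a*d))*ln((1-exp(-a*d))/(p0*(1-exp(-a0*d))+p1*(1-exp(-a1*d)))) / d)
          \<longlongrightarrow> b*a*ln(a/(p0*a0+p1*a1))) (at_right 0)"
proof -
  have Q: "((\<lambda>d. p0*((1-exp(-a0*d))/d) + p1*((1-exp(-a1*d))/d)) \<longlongrightarrow> p0*a0+p1*a1) (at_right 0)"
    by (intro tendsto_intros lim_E)
  have lim: "((\<lambda>d. b*((1 - exp(-a*d)) / d)*ln(((1 - exp(-a*d)) / d)/(p0*((1-exp(-a0*d))/d) + p1*((1-exp(-a1*d))/d))))
     \<longlongrightarrow> b*a*ln(a/(p0*a0+p1*a1))) (at_right 0)"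
    by (intro tendsto_intros lim_E Q) (use M a in auto)
  have ev: "\<forall>\<^sub>F d in at_right 0. b*((1 - exp(-a*d)) / d)*ln(((1 - exp(-a*d)) / d)/(p0*((1-exp(-a0*d))/d) + p1*((1-exp(-a1*d))/d)))
     = b*(1-exp(-a*d))*ln((1-exp(-a*d))/(p0*(1-exp(-a0*d))+p1*(1-exp(-a1*d)))) / d"
  proof (rule eventually_mono[OF eventually_at_right_less])
    fix d :: real assume d: "0 < d"
    have "p0*((1-exp(-a0*d))/d) + p1*((1-exp(-a1*d))/d) = (p0*(1-exp(-a0*d))+p1*(1-exp(-a1*d)))/d"
      by (simp add: add_divide_distrib)
    moreover have "((1 - exp(-a*d)) / d)/(X/d) = (1 - exp(-a*d))/X" for X using d by simp
    ultimately show "b*((1 - exp(-a*d)) / d)*ln(((1 - exp(-a*d)) / d)/(p0*((1-exp(-a0*d))/d) + p1*((1-exp(-a1*d))/d)))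
     = b*(1-exp(-a*d))*ln((1-exp(-a*d))/(p0*(1-exp(-a0*d))+p1*(1-exp(-a1*d)))) / d" by simp
  qed
  show ?thesis using tendsto_cong[OF ev] lim by simp
qed

lemma lim_all:
  fixes p0 p1 a0 a1 :: real
  assumes p0: "p0>0" and p1: "p1>0" and pq: "p0+p1=1" and a0: "a0 \<ge> 0" and a1: "a1 \<ge> 0"
  shows "((\<lambda>d. Fx p0 p1 a0 a1 d / d) \<longlongrightarrow> Lf p0 p1 a0 a1) (at_right 0)"
proof -
  define T0 where "T0 = (\<lambda>d. p0*exp(-a0*d)*ln(exp(-a0*d)/(p0*exp(-a0*d)+p1*exp(-a1*d)))
   + p1*exp(-a1*d)*ln(exp(-a1*d)/(p0*exp(-a0*d)+p1*exp(-a1*d))))"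
  define T10 where "T10 = (\<lambda>d::real. if a0 = 0 then 0 else p0*(1-exp(-a0*d))*ln((1-exp(-a0*d))/(p0*(1-exp(-a0*d))+p1*(1-exp(-a1*d)))))"
  define T11 where "T11 = (\<lambda>d::real. if a1 = 0 then 0 else p1*(1-exp(-a1*d))*ln((1-exp(-a1*d))/(p0*(1-exp(-a0*d))+p1*(1-exp(-a1*d)))))"
  have F: "Fx p0 p1 a0 a1 d / d = T0 d / d + T10 d / d + T11 d / d" for d
    by (simp add: Fx_def T0_def T10_def T11_def add_divide_distrib)
  have l0: "((\<lambda>d. T0 d / d) \<longlongrightarrow> 0) (at_right 0)" unfolding T0_def by (rule lim_T0[OF p0 p1 pq])
  have l10: "((\<lambda>d. T10 d / d) \<longlongrightarrow> (if a0 = 0 then 0 else p0*a0*ln(a0/(p0*a0+p1*a1)))) (at_right 0)"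
  proof (cases "a0 = 0")
    case True then show ?thesis by (simp add: T10_def)
  next
    case False
    hence a: "a0 > 0" using a0 by simp
    have M: "p0*a0+p1*a1 > 0" using a p0 p1 a1 by (simp add: add_pos_nonneg)
    show ?thesis using lim_T1[OF M a, of p0] False by (simp add: T10_def)
  qed
  have l11: "((\<lambda>d. T11 d / d) \<longlongrightarrow> (if a1 = 0 then 0 else p1*a1*ln(a1/(p0*a0+p1*a1)))) (at_right 0)"
  proof (cases "a1 = 0")
    case True then show ?thesis by (simp add: T11_def)
  next
    case False
    hence a: "a1 > 0" using a1 by simp
    have M: "p0*a0+p1*a1 > 0" using a p0 p1 a0 by (simp add: add_nonneg_pos)
    show ?thesis using lim_T1[OF M a, of p1] False by (simp add: T11_def)
  qed
  have "((\<lambda>d. T0 d / d + T10 d / d + T11 d / d) \<longlongrightarrow> 0 + (if a0 = 0 then 0 else p0*a0*ln(a0/(p0*a0+p1*a1))) + (if a1 = 0 then 0 else p1*a1*ln(a1/(p0*a0+p1*a1)))) (at_right 0)"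
    by (intro tendsto_add l0 l10 l11)
  thus ?thesis unfolding F by (simp add: Lf_def)
qed


theorem lemma1:
  fixes S pr :: "nat \<Rightarrow> real"
  assumes "pr 0 > 0" and "pr 1 > 0" and "pr 0 + pr 1 = 1" and "pr 0 \<noteq> pr 1"
  defines "lstar \<equiv> (S 0 * pr 0 - S 1 * pr 1) / (pr 1 - pr 0)"
  shows "(\<forall>l::real. \<exists>A B.
            ((\<lambda>d. I_l S pr lstar d / d) \<longlongrightarrow> A) (at_right 0) \<and>
            ((\<lambda>d. I_l S pr l d / d) \<longlongrightarrow> B) (at_right 0) \<and> A \<ge> B)
         \<and> pr 0 * sqrt (rate (S 0) lstar) = pr 1 * sqrt (rate (S 1) lstar)"
proof -
  note p0 = assms(1) and p1 = assms(2) and pq = assms(3) and pnq = assms(4)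
  have lim: "((\<lambda>d. I_l S pr l d / d) \<longlongrightarrow> Lf (pr 0) (pr 1) ((S 0 + l)^2) ((S 1 + l)^2)) (at_right 0)" for l
  proof -
    have ev: "\<forall>\<^sub>F d in at_right 0. Fx (pr 0) (pr 1) (rate (S 0) l) (rate (S 1) l) d / d = I_l S pr l d / d"
      by (rule eventually_mono[OF eventually_at_right_less]) (simp add: Ieq[OF p0 p1])
    have "((\<lambda>d. Fx (pr 0) (pr 1) (rate (S 0) l) (rate (S 1) l) d / d) \<longlongrightarrow> Lf (pr 0) (pr 1) (rate (S 0) l) (rate (S 1) l)) (at_right 0)"
      by (rule lim_all[OF p0 p1 pq]) (simp_all add: rate_def)
    thus ?thesis using tendsto_cong[OF ev] by (simp add: rate_def)
  qed
  define t where "t = (S 0 - S 1)/(pr 1 - pr 0)"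
  have dne: "pr 1 - pr 0 \<noteq> 0" using pnq by simp
  have x0: "S 0 + lstar = pr 1 * t" using dne unfolding lstar_def t_def by (simp add: field_simps)
  have x1: "S 1 + lstar = pr 0 * t" using dne unfolding lstar_def t_def by (simp add: field_simps)
  have diff: "pr 1 * t - pr 0 * t = S 0 - S 1"
  proof -
    have "pr 1 * t - pr 0 * t = (pr 1 - pr 0) * t" by (simp add: algebra_simps)
    also have "\<dots> = S 0 - S 1" using dne unfolding t_def by simp
    finally show ?thesis .
  qed
  have A: "Lf (pr 0) (pr 1) ((S 0 + lstar)^2) ((S 1 + lstar)^2) = Kc (pr 0) (pr 1) * (S 0 - S 1)^2"
    unfolding x0 x1 using Lstar[OF p0 p1 pq pnq, of t] diff by simp
  have B: "Lf (pr 0) (pr 1) ((S 0 + l)^2) ((S 1 + l)^2) \<le> Kc (pr 0) (pr 1) * (S 0 - S 1)^2" for l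
    using Lbound[OF p0 p1 pq pnq, of "S 0 + l" "S 1 + l"] by simp
  have part1: "\<forall>l::real. \<exists>A B.
            ((\<lambda>d. I_l S pr lstar d / d) \<longlongrightarrow> A) (at_right 0) \<and>
            ((\<lambda>d. I_l S pr l d / d) \<longlongrightarrow> B) (at_right 0) \<and> A \<ge> B"
  proof
    fix l
    show "\<exists>A B.
            ((\<lambda>d. I_l S pr lstar d / d) \<longlongrightarrow> A) (at_right 0) \<and>
            ((\<lambda>d. I_l S pr l d / d) \<longlongrightarrow> B) (at_right 0) \<and> A \<ge> B"
      using lim[of lstar] lim[of l] A B[of l] by auto
  qed
  have part2: "pr 0 * sqrt (rate (S 0) lstar) = pr 1 * sqrt (rate (S 1) lstar)"
    unfolding rate_def x0 x1 using p0 p1 by (simp add: abs_mult)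
  show ?thesis using part1 part2 by blast
qed

end
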